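(* Let $k\ge2$ be an integer, $c\in(0,1)$, and let $(M_n)_{n\ge1}$ be integers with $1\le M_n\le kn-1$ and $M_n/(kn)\to c$. Then \[ \lim_{n\to\infty} P_{n,k}(\mathcal{S}(n,k;M_n))=k\sum_{l=1}^k\binom kl\Big(\frac c{1-c}\Big)^l\sum_{s=1}^\infty\frac{(1-c)^{k(s+1)}}{k(s+1)-l}+(1-c)^k\sum_{l=1}^{k-1}\binom kl\Big(\frac c{1-c}\Big)^l. \]
   Context: Fix integers $k\ge2$, $n\ge1$. There are $kn$ items, $k$ items at each of the ranks $1,2,\dots,n$ (rank $n$ is highest). The items are revealed one at a time in a uniformly random order, i.e. the sequence of ranks is a uniformly random permutation of the multiset $\{1^k,2^k,\dots,n^k\}$; $P_{n,k}$ denotes this uniform probability. For $M\in\{1,\dots,kn-1\}$, the strategy $\mathcal{S}(n,k;M)$ lets the first $M$ items pass and then selects the first later-arriving item whose rank is greater than or equal to the highest rank among the first $M$ items (if such an item exists; otherwise nothing is selected). $P_{n,k}(\mathcal{S}(n,k;M))$ denotes the probability that this strategy selects an item of rank $n$. *)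

theory Defs
  imports "HOL-Analysis.Analysis"
begin

text \<open>Rank sequences: uniformly random permutations of the multiset {1^k,...,n^k},
  represented as lists of length k*n in which every rank 1..n occurs exactly k times.\<close>
definition arrangements :: "nat \<Rightarrow> nat \<Rightarrow> nat list set" where
  "arrangements n k = {xs. length xs = k * n \<and> set xs \<subseteq> {1..n} \<and>
                          (\<forall>r\<in>{1..n}. count_list xs r = k)}"

definition strategy_succeeds :: "nat \<Rightarrow> nat \<Rightarrow> nat list \<Rightarrow> bool" where
  "strategy_succeeds n M xs =
     (case find (\<lambda>x. Max (set (take M xs)) \<le> x) (drop M xs) of
        None \<Rightarrow> False
      | Some x \<Rightarrow> x = n)"

definition success_prob :: "nat \<Rightarrow> nat \<Rightarrow> nat \<Rightarrow> real" where
  "success_prob n k M =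
     real (card {xs \<in> arrangements n k. strategy_succeeds n M xs}) / real (card (arrangements n k))"

end

theory Submission
  imports Defs "HOL-Combinatorics.Multiset_Permutations"
begin

lemma permute_list_inj:
  assumes p: "p permutes {..<L}" and lx: "length xs = L" and ly: "length ys = L"
    and eq: "permute_list p xs = permute_list p ys"
  shows "xs = ys"
proof (rule nth_equalityI)
  show "length xs = length ys" using lx ly by simp
  fix j assume j: "j < length xs"
  have "j \<in> p ` {..<L}" using permutes_image[OF p] j lx by simp
  then obtain i where i: "i < L" "j = p i" by blast
  have "permute_list p xs ! i = permute_list p ys ! i" using eq by simp
  moreover have "permute_list p xs ! i = xs ! p i" using p lx i by (intro permute_list_nth) auto
  moreover have "permute_list p ys ! i = ys ! p i" using p ly i by (intro permute_list_nth) auto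
  ultimately show "xs ! j = ys ! j" using i by simp
qed

lemma fiber_card_le:
  assumes zs: "zs \<in> permutations_of_multiset (image_mset f A)"
    and zs': "zs' \<in> permutations_of_multiset (image_mset f A)"
  shows "card {xs \<in> permutations_of_multiset A. map f xs = zs}
       \<le> card {xs \<in> permutations_of_multiset A. map f xs = zs'}"
proof -
  have m: "mset zs' = mset zs" using zs zs' by (simp add: permutations_of_multiset_def)
  obtain p where p: "p permutes {..<length zs}" "permute_list p zs = zs'"
    using mset_eq_permutation[OF m] by blast
  show ?thesis
  proof (rule card_inj_on_le[where f = "permute_list p"])
    show "finite {xs \<in> permutations_of_multiset A. map f xs = zs'}" by simp
    show "inj_on (permute_list p) {xs \<in> permutations_of_multiset A. map f xs = zs}"
    proof (rule inj_onI)
      fix xs ys assume xs: "xs \<in> {xs \<in> permutations_of_multiset A. map f xs = zs}"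
        and ys: "ys \<in> {xs \<in> permutations_of_multiset A. map f xs = zs}"
        and e: "permute_list p xs = permute_list p ys"
      have "map f xs = zs" "map f ys = zs" using xs ys by auto
      hence "length (map f xs) = length zs" "length (map f ys) = length zs" by simp_all
      hence "length xs = length zs" "length ys = length zs" by simp_all
      thus "xs = ys" using permute_list_inj[OF p(1) _ _ e] by blast
    qed
    show "permute_list p ` {xs \<in> permutations_of_multiset A. map f xs = zs}
        \<subseteq> {xs \<in> permutations_of_multiset A. map f xs = zs'}"
    proof (rule image_subsetI)
      fix xs assume xs0: "xs \<in> {xs \<in> permutations_of_multiset A. map f xs = zs}"
      hence xs: "xs \<in> permutations_of_multiset A" "map f xs = zs" by auto
      have l: "length xs = length zs" using xs(2) by auto
      have "permute_list p xs \<in> permutations_of_multiset A"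
        using xs p l by (simp add: permutations_of_multiset_def)
      moreover have "map f (permute_list p xs) = zs'"
        using permute_list_map[of p xs f] p l xs by simp
      ultimately show "permute_list p xs \<in> {xs \<in> permutations_of_multiset A. map f xs = zs'}" by simp
    qed
  qed
qed

lemma coarsen_card:
  fixes f :: "'a \<Rightarrow> 'b"
  shows "card {xs \<in> permutations_of_multiset A. P (map f xs)} * card (permutations_of_multiset (image_mset f A))
       = card {zs \<in> permutations_of_multiset (image_mset f A). P zs} * card (permutations_of_multiset A)"
proof -
  define F where "F zs = {xs \<in> permutations_of_multiset A. map f xs = zs}" for zs
  define Z where "Z = permutations_of_multiset (image_mset f A)"
  obtain z0 where z0: "z0 \<in> Z" unfolding Z_def using permutations_of_multiset_not_empty by blast
  have cF: "card (F zs) = card (F z0)" if "zs \<in> Z" for zs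
    using fiber_card_le[of zs f A z0] fiber_card_le[of z0 f A zs] that z0
    unfolding F_def Z_def by simp
  have gen: "card {xs \<in> permutations_of_multiset A. Q (map f xs)} = card {zs \<in> Z. Q zs} * card (F z0)" for Q
  proof -
    have "{xs \<in> permutations_of_multiset A. Q (map f xs)} = (\<Union>zs\<in>{zs \<in> Z. Q zs}. F zs)"
      unfolding F_def Z_def by (auto simp: permutations_of_multiset_def)
    moreover have "card (\<Union>zs\<in>{zs \<in> Z. Q zs}. F zs) = (\<Sum>zs\<in>{zs \<in> Z. Q zs}. card (F zs))"
      by (rule card_UN_disjoint) (auto simp: F_def Z_def)
    ultimately have "card {xs \<in> permutations_of_multiset A. Q (map f xs)} = (\<Sum>zs\<in>{zs \<in> Z. Q zs}. card (F zs))"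
      by simp
    also have "\<dots> = (\<Sum>zs\<in>{zs \<in> Z. Q zs}. card (F z0))" using cF by (intro sum.cong) auto
    finally show ?thesis by simp
  qed
  have "card (permutations_of_multiset A) = card {xs \<in> permutations_of_multiset A. True}" by simp
  also have "\<dots> = card {zs \<in> Z. True} * card (F z0)" by (rule gen)
  finally have "card (permutations_of_multiset A) = card Z * card (F z0)" by simp
  thus ?thesis using gen[of P] unfolding Z_def by simp
qed

lemma split_card:
  assumes sub: "B \<subseteq># C" and sz: "size B = m"
  shows "card {zs \<in> permutations_of_multiset C. mset (take m zs) = B \<and> Q (drop m zs)}
       = card (permutations_of_multiset B) * card {qs \<in> permutations_of_multiset (C - B). Q qs}"
proof -
  have eq: "{zs \<in> permutations_of_multiset C. mset (take m zs) = B \<and> Q (drop m zs)}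
      = (\<lambda>(p,q). p @ q) ` (permutations_of_multiset B \<times> {qs \<in> permutations_of_multiset (C - B). Q qs})"
  proof safe
    fix zs assume zs: "zs \<in> permutations_of_multiset C" "Q (drop m zs)" "B = mset (take m zs)"
    have "mset (drop m zs) = C - B"
      using zs by (metis add_diff_cancel_left' append_take_drop_id mset_append permutations_of_multisetD)
    thus "zs \<in> (\<lambda>(p,q). p @ q) ` (permutations_of_multiset (mset (take m zs)) \<times> {qs \<in> permutations_of_multiset (C - mset (take m zs)). Q qs})"
      using zs by (intro image_eqI[of _ _ "(take m zs, drop m zs)"]) (auto simp: permutations_of_multiset_def)
  next
    fix p q assume p: "p \<in> permutations_of_multiset B" and q: "q \<in> permutations_of_multiset (C - B)" "Q q"
    have lp: "length p = m" using p sz by (auto simp: permutations_of_multiset_def)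
    show "p @ q \<in> permutations_of_multiset C" using p q sub
      by (auto simp: permutations_of_multiset_def)
    show "mset (take m (p @ q)) = B" "Q (drop m (p @ q))" using lp p q
      by (auto simp: permutations_of_multiset_def)
  qed
  have inj: "inj_on (\<lambda>(p,q). p @ q) (permutations_of_multiset B \<times> {qs \<in> permutations_of_multiset (C - B). Q qs})"
  proof (rule inj_onI)
    fix x y assume x: "x \<in> permutations_of_multiset B \<times> {qs \<in> permutations_of_multiset (C - B). Q qs}"
      and y: "y \<in> permutations_of_multiset B \<times> {qs \<in> permutations_of_multiset (C - B). Q qs}"
      and e: "(case x of (p, q) \<Rightarrow> p @ q) = (case y of (p, q) \<Rightarrow> p @ q)"
    obtain p q p' q' where xy: "x = (p, q)" "y = (p', q')" by (cases x, cases y) auto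
    have "length p = m" "length p' = m" using x y sz xy
      by (auto simp: permutations_of_multiset_def dest: arg_cong[where f=size])
    thus "x = y" using e xy by auto
  qed
  show ?thesis unfolding eq by (subst card_image[OF inj]) (simp add: card_cartesian_product)
qed

lemma split_card_empty:
  assumes "\<not> B \<subseteq># C"
  shows "{zs \<in> permutations_of_multiset C. mset (take m zs) = B \<and> Q (drop m zs)} = {}"
  using assms by (auto simp: permutations_of_multiset_def)
    (metis append_take_drop_id mset_append mset_subset_eq_add_left)

lemma find_map_same:
  assumes "\<And>x. P (f x) = P x" "\<And>x. P x \<Longrightarrow> f x = x"
  shows "find P (map f ys) = find P ys"
  using assms by (induction ys) auto

lemma first_hit_card:
  fixes C :: "'a multiset" and a :: 'a
  assumes Pa: "P a"
  shows "real (card {qs \<in> permutations_of_multiset C. find P qs = Some a}) * real (size (filter_mset P C))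
       = real (count C a) * real (card (permutations_of_multiset C))"
proof (induction C rule: multiset_remove_induct)
  case empty
  then show ?case by simp
next
  case (remove C)
  define S where "S = set_mset C"
  define h where "h D = card {qs \<in> permutations_of_multiset D. find P qs = Some a}" for D :: "'a multiset"
  define pc where "pc D = card (permutations_of_multiset D)" for D :: "'a multiset"
  define p where "p = size (filter_mset P C)"
  have setS: "{qs \<in> permutations_of_multiset C. find P qs = Some a}
      = (\<Union>y\<in>S. (#) y ` {qs \<in> permutations_of_multiset (C - {#y#}). find P (y # qs) = Some a})"
    unfolding S_def by (subst permutations_of_multiset_nonempty[OF remove.hyps]) blast
  have hC: "h C = (\<Sum>y\<in>S. card {qs \<in> permutations_of_multiset (C - {#y#}). find P (y # qs) = Some a})"
    unfolding h_def setS by (subst card_UN_disjoint) (auto simp: S_def card_image)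
  have piece: "card {qs \<in> permutations_of_multiset (C - {#y#}). find P (y # qs) = Some a}
      = (if P y then (if y = a then pc (C - {#y#}) else 0) else h (C - {#y#}))" for y
    by (auto simp: h_def pc_def)
  have szC: "size C > 0" using remove.hyps by (simp add: nonempty_has_size)
  have sizeS: "size C = (\<Sum>y\<in>S. count C y)" unfolding S_def by (rule size_multiset_overloaded_eq)
  have pS: "p = (\<Sum>y\<in>S. if P y then count C y else 0)"
  proof -
    have "p = (\<Sum>y\<in>set_mset (filter_mset P C). count (filter_mset P C) y)"
      unfolding p_def by (rule size_multiset_overloaded_eq)
    also have "\<dots> = (\<Sum>y\<in>S. count (filter_mset P C) y)"
      unfolding S_def by (intro sum.mono_neutral_left) auto
    finally show ?thesis by simp
  qed
  have rem: "real (pc (C - {#y#})) * real (size C) = real (count C y) * real (pc C)" if "y \<in> S" for y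
    using card_permutations_of_multiset_remove_aux[of y C] that unfolding pc_def S_def
    by (metis mult.commute of_nat_mult)
  have IHy: "real (h (C - {#y#})) * real p = real (count C a) * real (pc (C - {#y#}))"
    if "y \<in> S" "\<not> P y" for y
  proof -
    have "filter_mset P (C - {#y#}) = filter_mset P C" using that by (simp add: S_def)
    moreover have "count (C - {#y#}) a = count C a" using that Pa by auto
    ultimately show ?thesis using remove.IH[of y] that unfolding h_def pc_def p_def S_def by simp
  qed
  have "real (h C) * real p * real (size C)
      = (\<Sum>y\<in>S. real (if P y then (if y = a then pc (C - {#y#}) else 0) else h (C - {#y#})) * real p * real (size C))"
    unfolding hC piece by (simp add: sum_distrib_right)
  also have "\<dots> = (\<Sum>y\<in>S. (if P y then (if y = a then real p * real (count C y) * real (pc C) else 0)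
            else real (count C a) * real (count C y) * real (pc C)))"
  proof (intro sum.cong refl)
    fix y assume y: "y \<in> S"
    show "real (if P y then (if y = a then pc (C - {#y#}) else 0) else h (C - {#y#})) * real p * real (size C)
        = (if P y then (if y = a then real p * real (count C y) * real (pc C) else 0)
            else real (count C a) * real (count C y) * real (pc C))"
    proof (cases "P y")
      case True
      then show ?thesis
      proof (cases "y = a")
        case True
        with \<open>P y\<close> show ?thesis using rem[OF y] by (simp add: mult.commute mult.left_commute)
      qed simp
    next
      case False
      then show ?thesis using IHy[OF y False] rem[OF y] by (simp add: mult.commute mult.left_commute)
    qed
  qed
  also have "\<dots> = real (count C a) * real (pc C) * real (size C)"
  proof -
    have "(\<Sum>y\<in>S. (if P y then (if y = a then real p * real (count C y) * real (pc C) else 0)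
            else real (count C a) * real (count C y) * real (pc C)))
        = (\<Sum>y\<in>S. (if P y \<and> y = a then real p * real (count C a) * real (pc C) else 0))
          + real (count C a) * real (pc C) * (\<Sum>y\<in>S. if P y then 0 else real (count C y))"
    proof -
      have "(\<Sum>y\<in>S. (if P y then (if y = a then real p * real (count C y) * real (pc C) else 0)
            else real (count C a) * real (count C y) * real (pc C)))
          = (\<Sum>y\<in>S. (if P y \<and> y = a then real p * real (count C a) * real (pc C) else 0)
            + real (count C a) * real (pc C) * (if P y then 0 else real (count C y)))"
        by (intro sum.cong refl) auto
      also have "\<dots> = (\<Sum>y\<in>S. (if P y \<and> y = a then real p * real (count C a) * real (pc C) else 0))
          + real (count C a) * real (pc C) * (\<Sum>y\<in>S. if P y then 0 else real (count C y))"
        by (simp only: sum.distrib sum_distrib_left)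
      finally show ?thesis .
    qed
    also have "(\<Sum>y\<in>S. (if P y \<and> y = a then real p * real (count C a) * real (pc C) else 0))
        = real p * real (count C a) * real (pc C)"
    proof (cases "a \<in> S")
      case True
      have "(\<Sum>y\<in>S. (if P y \<and> y = a then real p * real (count C a) * real (pc C) else 0))
          = (\<Sum>y\<in>S. (if y = a then real p * real (count C a) * real (pc C) else 0))"
        using Pa by (intro sum.cong refl) auto
      thus ?thesis using True by (simp add: S_def)
    next
      case False
      hence "count C a = 0" by (simp add: S_def not_in_iff)
      thus ?thesis by (simp only: of_nat_0 mult_zero_right mult_zero_left if_cancel sum.neutral_const)
    qed
    also have "(\<Sum>y\<in>S. if P y then 0 else real (count C y)) = real (size C) - real p"
    proof -
      have a1: "real (size C) = (\<Sum>y\<in>S. real (count C y))" using sizeS by simp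
      have a2: "real p = (\<Sum>y\<in>S. real (if P y then count C y else 0))" using pS by simp
      have a3: "(\<Sum>y\<in>S. real (if P y then count C y else 0)) = (\<Sum>y\<in>S. if P y then real (count C y) else 0)"
        by (intro sum.cong refl) simp
      have a4: "(\<Sum>y\<in>S. real (count C y)) = (\<Sum>y\<in>S. if P y then real (count C y) else 0)
           + (\<Sum>y\<in>S. if P y then 0 else real (count C y))"
        by (simp only: sum.distrib[symmetric]) (intro sum.cong refl, simp)
      show ?thesis using a1 a2 a3 a4 by linarith
    qed
    finally show ?thesis by (simp add: algebra_simps)
  qed
  finally have "real (h C) * real p * real (size C) = real (count C a) * real (pc C) * real (size C)" .
  hence "real (h C) * real p = real (count C a) * real (pc C)" using szC by (simp del: size_eq_0_iff_empty)
  thus ?case unfolding h_def pc_def p_def by simp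
qed

definition ff :: "nat \<Rightarrow> nat \<Rightarrow> real" where
  "ff a j = (\<Prod>i<j. real a - real i)"

lemma fact_ff: "j \<le> a \<Longrightarrow> fact a = ff a j * fact (a - j)"
proof (induction j)
  case 0
  then show ?case by (simp add: ff_def)
next
  case (Suc j)
  have "fact (a - j) = (real (a - j)) * (fact (a - Suc j) :: real)"
    using Suc.prems by (metis Suc_diff_Suc fact_Suc less_eq_Suc_le)
  moreover have "real (a - j) = real a - real j" using Suc.prems by simp
  ultimately show ?case using Suc by (simp add: ff_def)
qed

lemma ff_add: "j1 \<le> a \<Longrightarrow> ff a (j1 + j2) = ff a j1 * ff (a - j1) j2"
  by (induction j2) (auto simp: ff_def)

lemma ff_div: "ff a j / ff b j = (\<Prod>i<j. (real a - real i) / (real b - real i))"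
  unfolding ff_def by (simp add: prod_dividef)

lemma card_perm_prod:
  assumes "finite S" "set_mset X \<subseteq> S"
  shows "real (card (permutations_of_multiset X)) * (\<Prod>x\<in>S. fact (count X x)) = fact (size X)"
proof -
  have "(\<Prod>x\<in>S. fact (count X x) :: nat) = (\<Prod>x\<in>set_mset X. fact (count X x))"
    using assms by (intro prod.mono_neutral_right) (auto simp: not_in_iff)
  hence "card (permutations_of_multiset X) * (\<Prod>x\<in>S. fact (count X x) :: nat) = fact (size X)"
    using card_permutations_of_multiset_aux[of X] by simp
  hence "real (card (permutations_of_multiset X) * (\<Prod>x\<in>S. fact (count X x) :: nat)) = fact (size X)"
    by (metis of_nat_fact)
  thus ?thesis by simp
qed

definition Amset :: "nat \<Rightarrow> nat \<Rightarrow> nat multiset" where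
  "Amset n k = (\<Sum>r\<in>{1..n}. replicate_mset k r)"

lemma count_Amset: "count (Amset n k) x = (if 1 \<le> x \<and> x \<le> n then k else 0)"
proof -
  have "count (Amset n k) x = (\<Sum>r\<in>{1..n}. if r = x then k else 0)"
    unfolding Amset_def count_sum by (intro sum.cong) auto
  also have "\<dots> = (if 1 \<le> x \<and> x \<le> n then k else 0)" by (simp add: sum.delta)
  finally show ?thesis .
qed

lemma size_via_sum:
  assumes "finite S" "set_mset X \<subseteq> S"
  shows "size X = (\<Sum>x\<in>S. count X x)"
proof -
  have "size X = (\<Sum>x\<in>set_mset X. count X x)" by (rule size_multiset_overloaded_eq)
  also have "\<dots> = (\<Sum>x\<in>S. count X x)"
    using assms by (intro sum.mono_neutral_left) (auto simp: not_in_iff)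
  finally show ?thesis .
qed

lemma set_Amset: "set_mset (Amset n k) \<subseteq> {1..n}"
  by (auto simp: count_Amset simp flip: count_greater_zero_iff split: if_splits)

lemma size_Amset: "size (Amset n k) = k * n"
  using size_via_sum[OF _ set_Amset, of n k] by (simp add: count_Amset)

lemma arr_eq: "arrangements n k = permutations_of_multiset (Amset n k)"
proof (intro equalityI subsetI)
  fix xs assume xs: "xs \<in> arrangements n k"
  have "mset xs = Amset n k"
  proof (rule multiset_eqI)
    fix x
    show "count (mset xs) x = count (Amset n k) x"
    proof (cases "1 \<le> x \<and> x \<le> n")
      case True
      thus ?thesis using xs by (simp add: arrangements_def count_mset count_Amset)
    next
      case False
      hence "x \<notin> set xs" using xs by (auto simp: arrangements_def)
      hence "count_list xs x = 0" by (simp add: count_list_0_iff)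
      thus ?thesis using False by (auto simp add: count_Amset count_mset)
    qed
  qed
  thus "xs \<in> permutations_of_multiset (Amset n k)" by (simp add: permutations_of_multiset_def)
next
  fix xs assume "xs \<in> permutations_of_multiset (Amset n k)"
  hence m: "mset xs = Amset n k" by (simp add: permutations_of_multiset_def)
  have "length xs = k * n" using m size_Amset by (metis size_mset)
  moreover have "set xs \<subseteq> {1..n}" using m set_Amset by (metis set_mset_mset)
  moreover have "\<forall>r\<in>{1..n}. count_list xs r = k"
    using m by (auto simp: count_Amset simp flip: count_mset)
  ultimately show "xs \<in> arrangements n k" by (simp add: arrangements_def)
qed

definition fcut :: "nat \<Rightarrow> nat \<Rightarrow> nat" where "fcut t x = (if x < t then 0 else x)"
definition Bm :: "nat \<Rightarrow> nat \<Rightarrow> nat \<Rightarrow> nat multiset" where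
  "Bm M t l = replicate_mset l t + replicate_mset (M - l) 0"
definition Eset :: "nat \<Rightarrow> nat \<Rightarrow> nat \<Rightarrow> nat \<Rightarrow> nat \<Rightarrow> nat list set" where
  "Eset n k M t l = {xs \<in> permutations_of_multiset (Amset n k).
      mset (take M (map (fcut t) xs)) = Bm M t l \<and> find (\<lambda>x. t \<le> x) (drop M (map (fcut t) xs)) = Some n}"

lemma mset_map_fcut:
  assumes "1 \<le> t" "\<forall>x\<in>set ys. x \<le> t"
  shows "mset (map (fcut t) ys) = replicate_mset (count_list ys t) t + replicate_mset (length ys - count_list ys t) 0"
  using assms(2)
proof (induction ys)
  case Nil
  then show ?case by simp
next
  case (Cons x ys)
  have le: "count_list ys t \<le> length ys" by (rule count_le_length)
  show ?case
  proof (cases "x = t")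
    case True
    thus ?thesis using Cons assms(1) by (simp add: fcut_def)
  next
    case False
    hence "x < t" using Cons.prems by auto
    hence "fcut t x = 0" by (simp add: fcut_def)
    moreover have "Suc (length ys) - count_list ys t = Suc (length ys - count_list ys t)" using le by simp
    ultimately show ?thesis using Cons False by simp
  qed
qed

lemma fcut_inv:
  assumes t: "1 \<le> t" and m: "mset (map (fcut t) ys) = Bm M t l" and l: "1 \<le> l"
  shows "(\<forall>x\<in>set ys. x \<le> t) \<and> t \<in> set ys"
proof
  show "\<forall>x\<in>set ys. x \<le> t"
  proof
    fix x assume x: "x \<in> set ys"
    hence "fcut t x \<in># Bm M t l" using m by (metis image_eqI mset_map set_image_mset set_mset_mset)
    hence "fcut t x = t \<or> fcut t x = 0" by (auto simp: Bm_def split: if_splits)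
    thus "x \<le> t" using t by (auto simp: fcut_def split: if_splits)
  qed
  have "t \<in># Bm M t l" using l by (simp add: Bm_def)
  hence "t \<in> fcut t ` set ys" using m by (metis mset_map set_image_mset set_mset_mset)
  then obtain x where x: "x \<in> set ys" "fcut t x = t" by auto
  hence "x = t" using t by (auto simp: fcut_def split: if_splits)
  thus "t \<in> set ys" using x by simp
qed

lemma find_fcut:
  assumes "1 \<le> t"
  shows "find (\<lambda>x. t \<le> x) (map (fcut t) ys) = find (\<lambda>x. t \<le> x) ys"
  using assms by (intro find_map_same) (auto simp: fcut_def)

lemma Max_fcut:
  assumes t: "1 \<le> t" and m: "mset (map (fcut t) ys) = Bm M t l" and l: "1 \<le> l"
  shows "Max (set ys) = t"
  using fcut_inv[OF t m l] by (intro Max_eqI) auto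

lemma success_iff:
  assumes n: "n \<ge> 1" and M: "1 \<le> M" "M \<le> k * n" and xs: "xs \<in> permutations_of_multiset (Amset n k)"
  shows "strategy_succeeds n M xs \<longleftrightarrow> (\<exists>t\<in>{1..n}. \<exists>l\<in>{1..k}. xs \<in> Eset n k M t l)"
proof
  have mx: "mset xs = Amset n k" using xs by (simp add: permutations_of_multiset_def)
  have lx: "length xs = k * n" using mx size_Amset by (metis size_mset)
  have sx: "set xs \<subseteq> {1..n}" using mx set_Amset by (metis set_mset_mset)
  define ys where "ys = take M xs"
  have ly: "length ys = M" using lx M by (simp add: ys_def)
  assume succ: "strategy_succeeds n M xs"
  define t where "t = Max (set ys)"
  have ne: "set ys \<noteq> {}" using ly M by auto
  have tin: "t \<in> set ys" unfolding t_def using ne by (intro Max_in) auto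
  have sy: "set ys \<subseteq> set xs" unfolding ys_def by (rule set_take_subset)
  have t1: "t \<in> {1..n}" using tin sy sx by auto
  define l where "l = count_list ys t"
  have l1: "1 \<le> l" using tin unfolding l_def by (metis count_list_0_iff less_one not_le)
  have "count_list xs t = count_list ys t + count_list (drop M xs) t"
    unfolding ys_def by (metis append_take_drop_id count_list_append)
  moreover have "count_list xs t = k" using mx t1 by (simp add: count_Amset flip: count_mset)
  ultimately have lk: "l \<le> k" unfolding l_def by simp
  have allle: "\<forall>x\<in>set ys. x \<le> t" unfolding t_def by auto
  have "mset (map (fcut t) ys) = Bm M t l"
    using mset_map_fcut[of t ys] allle t1 ly unfolding Bm_def l_def by simp
  hence A: "mset (take M (map (fcut t) xs)) = Bm M t l" by (simp add: ys_def take_map)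
  have "find (\<lambda>x. t \<le> x) (drop M xs) = Some n"
    using succ unfolding strategy_succeeds_def t_def ys_def by (auto split: option.splits)
  hence B: "find (\<lambda>x. t \<le> x) (drop M (map (fcut t) xs)) = Some n"
    using find_fcut[of t "drop M xs"] t1 by (simp add: drop_map)
  have "xs \<in> Eset n k M t l" using A B xs by (simp add: Eset_def)
  thus "\<exists>t\<in>{1..n}. \<exists>l\<in>{1..k}. xs \<in> Eset n k M t l"
    using t1 l1 lk by (intro bexI[of _ t] bexI[of _ l]) auto
next
  assume "\<exists>t\<in>{1..n}. \<exists>l\<in>{1..k}. xs \<in> Eset n k M t l"
  then obtain t l where t: "t \<in> {1..n}" and l: "l \<in> {1..k}" and e: "xs \<in> Eset n k M t l" by blast
  have m: "mset (map (fcut t) (take M xs)) = Bm M t l" using e by (simp add: Eset_def take_map)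
  have mx: "Max (set (take M xs)) = t" using Max_fcut[OF _ m] t l by auto
  have "find (\<lambda>x. t \<le> x) (drop M xs) = Some n"
    using e find_fcut[of t "drop M xs"] t by (simp add: Eset_def drop_map)
  thus "strategy_succeeds n M xs" unfolding strategy_succeeds_def mx by simp
qed

lemma Eset_disj:
  assumes "t \<ge> 1" "t' \<ge> 1" "l \<ge> 1" "l' \<ge> 1" "xs \<in> Eset n k M t l" "xs \<in> Eset n k M t' l'"
  shows "t = t' \<and> l = l'"
proof -
  have m: "mset (map (fcut t) (take M xs)) = Bm M t l" using assms by (simp add: Eset_def take_map)
  have m': "mset (map (fcut t') (take M xs)) = Bm M t' l'" using assms by (simp add: Eset_def take_map)
  have tt: "t = t'" using Max_fcut[OF _ m] Max_fcut[OF _ m'] assms by simp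
  have "count (Bm M t l) t = count (Bm M t l') t" using m m' tt by simp
  thus ?thesis using tt assms(1) by (simp add: Bm_def)
qed

lemma card_success:
  assumes n: "n \<ge> 1" and M: "1 \<le> M" "M \<le> k * n"
  shows "card {xs \<in> arrangements n k. strategy_succeeds n M xs}
       = (\<Sum>t\<in>{1..n}. \<Sum>l\<in>{1..k}. card (Eset n k M t l))"
proof -
  have eq: "{xs \<in> arrangements n k. strategy_succeeds n M xs} = (\<Union>p\<in>{1..n}\<times>{1..k}. Eset n k M (fst p) (snd p))"
  proof (intro equalityI subsetI)
    fix xs assume "xs \<in> {xs \<in> arrangements n k. strategy_succeeds n M xs}"
    hence xs: "xs \<in> permutations_of_multiset (Amset n k)" and s: "strategy_succeeds n M xs"
      by (auto simp: arr_eq)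
    from success_iff[OF n M xs] s obtain t l where "t \<in> {1..n}" "l \<in> {1..k}" "xs \<in> Eset n k M t l"
      by blast
    thus "xs \<in> (\<Union>p\<in>{1..n}\<times>{1..k}. Eset n k M (fst p) (snd p))" by force
  next
    fix xs assume "xs \<in> (\<Union>p\<in>{1..n}\<times>{1..k}. Eset n k M (fst p) (snd p))"
    then obtain t l where t: "t \<in> {1..n}" and l: "l \<in> {1..k}" and e: "xs \<in> Eset n k M t l" by auto
    hence xs: "xs \<in> permutations_of_multiset (Amset n k)" by (simp add: Eset_def)
    have "strategy_succeeds n M xs" using success_iff[OF n M xs] t l e by blast
    thus "xs \<in> {xs \<in> arrangements n k. strategy_succeeds n M xs}" by (simp add: arr_eq xs)
  qed
  have fin: "finite (Eset n k M t l)" for t l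
    by (rule finite_subset[of _ "permutations_of_multiset (Amset n k)"]) (auto simp: Eset_def)
  have "card (\<Union>p\<in>{1..n}\<times>{1..k}. Eset n k M (fst p) (snd p)) = (\<Sum>p\<in>{1..n}\<times>{1..k}. card (Eset n k M (fst p) (snd p)))"
  proof (rule card_UN_disjoint)
    show "\<forall>i\<in>{1..n} \<times> {1..k}. \<forall>j\<in>{1..n} \<times> {1..k}. i \<noteq> j \<longrightarrow>
        Eset n k M (fst i) (snd i) \<inter> Eset n k M (fst j) (snd j) = {}"
      using Eset_disj by fastforce
  qed (auto simp: fin)
  thus ?thesis unfolding eq by (simp add: sum.cartesian_product case_prod_beta)
qed

lemma count_fA:
  assumes k: "k \<ge> 1" and t: "1 \<le> t" "t \<le> n"
  shows "count (image_mset (fcut t) (Amset n k)) x = (if x = 0 then k * (t - 1) else if t \<le> x \<and> x \<le> n then k else 0)"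
proof -
  have setA: "set_mset (Amset n k) = {1..n}"
    using k by (auto simp: count_Amset simp flip: count_greater_zero_iff split: if_splits)
  have "count (image_mset (fcut t) (Amset n k)) x = (\<Sum>y\<in>fcut t -` {x} \<inter> {1..n}. k)"
    unfolding count_image_mset setA by (intro sum.cong refl) (auto simp: count_Amset)
  also have "\<dots> = k * card (fcut t -` {x} \<inter> {1..n})" by simp
  also have "fcut t -` {x} \<inter> {1..n} = (if x = 0 then {1..<t} else if t \<le> x \<and> x \<le> n then {x} else {})"
    using t by (auto simp: fcut_def split: if_splits)
  finally show ?thesis by auto
qed

lemma ratio_alg:
  fixes a b c f1 fk Q fN fml fl fM fc0 fkl fNM ffM ffNM ffN ch :: real
  assumes "a * (f1 * (fk * Q)) = fN" "b * (fml * (fl * 1)) = fM" "c * (fc0 * (fkl * Q)) = fNM"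
    "fM = ffM * fml" "fNM = ffNM * fc0" "fN = ffN * f1" "fl * fkl * ch = fk"
    "f1 \<noteq> 0" "fk \<noteq> 0" "Q \<noteq> 0" "fN \<noteq> 0" "fml \<noteq> 0" "fl \<noteq> 0" "fc0 \<noteq> 0" "fkl \<noteq> 0"
  shows "b * c / a = ch * ffM * ffNM / ffN"
proof -
  have ffN: "ffN \<noteq> 0" using assms by auto
  have a: "a = ffN / (fk * Q)" using assms by (auto simp: field_simps)
  have b: "b = ffM / fl" using assms by (auto simp: field_simps)
  have c: "c = ffNM / (fkl * Q)" using assms by (auto simp: field_simps)
  show ?thesis unfolding a b c using assms ffN by (auto simp: field_simps)
qed

definition Gp :: "nat \<Rightarrow> nat \<Rightarrow> nat \<Rightarrow> nat \<Rightarrow> nat \<Rightarrow> real" where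
  "Gp n k M s l = (\<Prod>i<l. (real M - real i) / (real (k * n) - real i)) *
      (\<Prod>i<k * (s + 1) - l. (real (k * n) - real M - real i) / (real (k * n) - real l - real i))"

lemma first_hit_div:
  assumes Pa: "P a"
  shows "real (card {qs \<in> permutations_of_multiset C. find P qs = Some a})
       = real (count C a) * real (card (permutations_of_multiset C)) / real (size (filter_mset P C))"
proof (cases "size (filter_mset P C) = 0")
  case True
  have "{qs \<in> permutations_of_multiset C. find P qs = Some a} = {}"
  proof (rule ccontr)
    assume "{qs \<in> permutations_of_multiset C. find P qs = Some a} \<noteq> {}"
    then obtain qs where qs: "qs \<in> permutations_of_multiset C" "find P qs = Some a" by blast
    have "a \<in> set qs" using qs(2) by (metis find_Some_iff nth_mem)
    hence "a \<in># C" using qs(1) by (simp add: permutations_of_multiset_def flip: set_mset_mset)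
    hence "a \<in># filter_mset P C" using Pa by simp
    moreover have "filter_mset P C = {#}" using True by (simp only: size_eq_0_iff_empty)
    ultimately show False by simp
  qed
  thus ?thesis by (simp only: True card.empty of_nat_0 division_ring_divide_zero)
next
  case False
  thus ?thesis using first_hit_card[of P a C, OF Pa] by (simp add: field_simps)
qed

lemma Gp_zero:
  assumes "\<not> (l \<le> M \<and> M - l \<le> k * (n - s - 1))" "s < n" "l \<le> k" "M \<le> k * n"
  shows "Gp n k M s l = 0"
proof (cases "l \<le> M")
  case False
  hence "(\<Prod>i<l. (real M - real i) / (real (k * n) - real i)) = 0"
    by (intro prod_zero) (auto intro!: bexI[of _ M])
  thus ?thesis by (simp add: Gp_def)
next
  case True
  hence h: "M - l > k * (n - s - 1)" using assms by auto
  have "k * (s + 1) + k * (n - s - 1) = k * ((s + 1) + (n - s - 1))" by (simp only: add_mult_distrib2)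
  also have "(s + 1) + (n - s - 1) = n" using assms(2) by simp
  finally have "k * (s + 1) + k * (n - s - 1) = k * n" .
  hence "k * n - M < k * (s + 1) - l" using h True assms by linarith
  hence "(\<Prod>i<k * (s + 1) - l. (real (k * n) - real M - real i) / (real (k * n) - real l - real i)) = 0"
    using assms by (intro prod_zero) (auto intro!: bexI[of _ "k * n - M"])
  thus ?thesis by (simp add: Gp_def)
qed

lemma Gp_ff:
  assumes "l \<le> M" "M - l \<le> k * (n - s - 1)" "s < n" "l \<le> k" "M \<le> k * n"
  shows "Gp n k M s l = ff M l * ff (k * n - M) (k * (s + 1) - l) / ff (k * n) (k * (s + 1))"
proof -
  have ks: "k * (s + 1) \<le> k * n" using assms(3) by (intro mult_le_mono2) simp
  have lk: "l \<le> k * (s+1)" using assms by (simp add: trans_le_add1)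
  have "ff (k * n) (k * (s + 1)) = ff (k * n) l * ff (k * n - l) (k * (s + 1) - l)"
    using ff_add[of l "k * n" "k * (s + 1) - l"] lk ks by simp
  moreover have "(\<Prod>i<l. (real M - real i) / (real (k * n) - real i)) = ff M l / ff (k * n) l"
    by (simp add: ff_div)
  moreover have "(\<Prod>i<k * (s + 1) - l. (real (k * n) - real M - real i) / (real (k * n) - real l - real i))
      = ff (k * n - M) (k * (s + 1) - l) / ff (k * n - l) (k * (s + 1) - l)"
    using assms lk ks by (simp add: ff_div of_nat_diff)
  ultimately show ?thesis by (simp add: Gp_def)
qed

definition wt :: "nat \<Rightarrow> nat \<Rightarrow> nat \<Rightarrow> real" where
  "wt k s l = real (k - (if s = 0 then l else 0)) / real (k * (s + 1) - l)"

lemma prod_S3: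
  fixes g :: "nat \<Rightarrow> real"
  assumes "1 \<le> t" "t \<le> n"
  shows "(\<Prod>x\<in>insert 0 (insert t {t<..n}). g x) = g 0 * (g t * (\<Prod>x\<in>{t<..n}. g x))"
  using assms by (subst prod.insert; auto)+

lemma nat_arith_aux:
  fixes a b N M l :: nat
  assumes "a + b = N" "l \<le> M" "M - l \<le> b" "l \<le> a"
  shows "N - M - (a - l) = b - (M - l)" "a - l \<le> N - M"
  using assms by linarith+

lemma prob_sl:
  assumes k: "k \<ge> 1" and n: "n \<ge> 1" and M: "1 \<le> M" "M < k * n" and s: "s < n" and l: "1 \<le> l" "l \<le> k"
  shows "real (card (Eset n k M (n - s) l))
       = real (card (permutations_of_multiset (Amset n k))) * (real (k choose l) * Gp n k M s l * wt k s l)"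
proof -
  define t where "t = n - s"
  have t1: "1 \<le> t" and tn: "t \<le> n" using s unfolding t_def by auto
  have KN: "k * (s + 1) + k * (t - 1) = k * n"
  proof -
    have "k * (s + 1) + k * (t - 1) = k * ((s + 1) + (t - 1))" by (simp only: add_mult_distrib2)
    also have "(s + 1) + (t - 1) = n" using s unfolding t_def by simp
    finally show ?thesis .
  qed
  have tm1: "n - s - 1 = t - 1" unfolding t_def by simp
  define A where "A = Amset n k"
  define fA where "fA = image_mset (fcut t) A"
  define B where "B = Bm M t l"
  define C where "C = fA - B"
  define Z where "Z = {zs \<in> permutations_of_multiset fA. mset (take M zs) = B \<and> find (\<lambda>x. t \<le> x) (drop M zs) = Some n}"
  have cfA: "count fA x = (if x = 0 then k * (t - 1) else if t \<le> x \<and> x \<le> n then k else 0)" for x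
    unfolding fA_def A_def using count_fA[OF k t1 tn] by simp
  have cB: "count B x = (if x = t then l else 0) + (if x = 0 then M - l else 0)" for x
    unfolding B_def Bm_def by simp
  have h1: "card (Eset n k M t l) * card (permutations_of_multiset fA) = card Z * card (permutations_of_multiset A)"
    unfolding Eset_def Z_def fA_def A_def B_def by (rule coarsen_card)
  have pos: "card (permutations_of_multiset fA) > 0"
    by (simp add: card_gt_0_iff)
  have eqE: "real (card (Eset n k M t l)) = real (card Z) * real (card (permutations_of_multiset A)) / real (card (permutations_of_multiset fA))"
    using h1 pos by (simp add: field_simps flip: of_nat_mult)
  show ?thesis
  proof (cases "l \<le> M \<and> M - l \<le> k * (t - 1)")
    case False
    have G0: "Gp n k M s l = 0" using Gp_zero[of l M k n s] False s l M unfolding tm1 by simp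
    have "Z = {}"
    proof (cases "l \<le> M")
      case True
      hence "\<not> B \<subseteq># fA" using False
        by (auto simp: subseteq_mset_def cfA cB dest!: spec[of _ 0])
      thus ?thesis unfolding Z_def by (rule split_card_empty)
    next
      case False
      show ?thesis
      proof (rule ccontr)
        assume "Z \<noteq> {}"
        then obtain zs where "mset (take M zs) = B" unfolding Z_def by blast
        moreover have "size (mset (take M zs)) \<le> M" by simp
        ultimately have "size B \<le> M" by simp
        thus False using False by (simp add: B_def Bm_def)
      qed
    qed
    thus ?thesis using eqE G0 unfolding t_def A_def by simp
  next
    case True
    hence lM: "l \<le> M" and Ml: "M - l \<le> k * (t - 1)" by auto
    have subB: "B \<subseteq># fA" using True l t1 tn by (auto simp: subseteq_mset_def cfA cB)
    have szB: "size B = M" using lM by (simp add: B_def Bm_def)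
    have cC: "count C x = count fA x - count B x" for x unfolding C_def by simp
    define H where "H = card {qs \<in> permutations_of_multiset C. find (\<lambda>x. t \<le> x) qs = Some n}"
    have cZ: "card Z = card (permutations_of_multiset B) * H"
      unfolding Z_def H_def C_def by (rule split_card[OF subB szB])
    have cCn: "count C n = k - (if s = 0 then l else 0)"
      using tn t1 unfolding cC cfA cB t_def by auto
    have setC: "set_mset C \<subseteq> insert 0 (insert t {t<..n})"
    proof
      fix x assume "x \<in># C"
      hence "count C x > 0" by simp
      thus "x \<in> insert 0 (insert t {t<..n})" unfolding cC cfA cB by (auto split: if_splits)
    qed
    have p: "size (filter_mset (\<lambda>x. t \<le> x) C) = k * (s + 1) - l"
    proof -
      have "size (filter_mset (\<lambda>x. t \<le> x) C) = (\<Sum>x\<in>insert 0 (insert t {t<..n}). count (filter_mset (\<lambda>x. t \<le> x) C) x)"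
        using setC by (intro size_via_sum) auto
      also have "\<dots> = (\<Sum>x\<in>insert t {t<..n}. count C x)"
        using t1 by (simp add: sum.insert)
      also have "\<dots> = (k - l) + (\<Sum>x\<in>{t<..n}. k)"
        using t1 tn by (simp add: sum.insert cC cfA cB)
      also have "\<dots> = (k - l) + k * (n - t)" by simp
      also have "\<dots> = k * (s + 1) - l"
      proof -
        have "n - t = s" unfolding t_def using s by simp
        thus ?thesis using l by (simp add: algebra_simps)
      qed
      finally show ?thesis .
    qed
    have hH: "real H = real (count C n) * real (card (permutations_of_multiset C)) / real (k * (s + 1) - l)"
      unfolding H_def using first_hit_div[of "\<lambda>x. t \<le> x" n C] tn p by simp
    define Q where "Q = (\<Prod>x\<in>{t<..n}. (fact k :: real))"
    have Q0: "Q \<noteq> 0" unfolding Q_def by simp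
    have setfA: "set_mset fA \<subseteq> insert 0 (insert t {t<..n})"
    proof
      fix x assume "x \<in># fA"
      hence "count fA x > 0" by simp
      thus "x \<in> insert 0 (insert t {t<..n})" unfolding cfA by (auto split: if_splits)
    qed
    have setB: "set_mset B \<subseteq> insert 0 (insert t {t<..n})"
      using subB setfA by (meson mset_subset_eqD subset_iff)
    have szfA: "size fA = k * n" unfolding fA_def A_def by (simp add: size_Amset)
    have szC: "size C = k * n - M" unfolding C_def using subB szfA szB by (simp add: size_Diff_submset)
    have eA: "real (card (permutations_of_multiset fA)) * (fact (k * (t - 1)) * (fact k * Q)) = fact (k * n)"
    proof -
      have "(\<Prod>x\<in>insert 0 (insert t {t<..n}). fact (count fA x)) = (fact (k * (t - 1)) * (fact k * Q) :: real)"
        unfolding prod_S3[OF t1 tn] Q_def using t1 tn by (intro arg_cong2[where f="(*)"] prod.cong refl) (auto simp: cfA)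
      thus ?thesis using card_perm_prod[OF _ setfA] szfA by simp
    qed
    have eB: "real (card (permutations_of_multiset B)) * (fact (M - l) * (fact l * 1)) = fact M"
    proof -
      have "(\<Prod>x\<in>insert 0 (insert t {t<..n}). fact (count B x)) = (fact (M - l) * (fact l * 1) :: real)"
        unfolding prod_S3[OF t1 tn] using t1 tn by (intro arg_cong2[where f="(*)"] prod.neutral) (auto simp: cB)
      thus ?thesis using card_perm_prod[OF _ setB] szB by simp
    qed
    have eC: "real (card (permutations_of_multiset C)) * (fact (k * (t - 1) - (M - l)) * (fact (k - l) * Q)) = fact (k * n - M)"
    proof -
      have "(\<Prod>x\<in>insert 0 (insert t {t<..n}). fact (count C x)) = (fact (k * (t - 1) - (M - l)) * (fact (k - l) * Q) :: real)"
        unfolding prod_S3[OF t1 tn] Q_def using t1 tn by (intro arg_cong2[where f="(*)"] prod.cong refl) (auto simp: cC cfA cB)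
      thus ?thesis using card_perm_prod[OF _ setC] szC by simp
    qed
    have fM: "fact M = ff M l * fact (M - l)" using lM by (rule fact_ff)
    have fNM: "fact (k * n - M) = ff (k * n - M) (k * (s + 1) - l) * fact (k * (t - 1) - (M - l))"
    proof -
      have la: "l \<le> k * (s + 1)" using l by (simp add: trans_le_add1)
      have "k * n - M - (k * (s + 1) - l) = k * (t - 1) - (M - l)" using nat_arith_aux(1)[OF KN lM Ml la] .
      moreover have "k * (s + 1) - l \<le> k * n - M" using nat_arith_aux(2)[OF KN lM Ml la] .
      ultimately show ?thesis using fact_ff[of "k * (s + 1) - l" "k * n - M"] by simp
    qed
    have fN: "fact (k * n) = ff (k * n) (k * (s + 1)) * fact (k * (t - 1))"
      using fact_ff[of "k * (s + 1)" "k * n"] KN by (metis add_diff_cancel_left' le_add1)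
    have ch: "fact l * fact (k - l) * real (k choose l) = fact k"
      using binomial_fact_lemma[of l k] l by (metis of_nat_fact of_nat_mult)
    have R: "real (card (permutations_of_multiset B)) * real (card (permutations_of_multiset C)) / real (card (permutations_of_multiset fA))
        = real (k choose l) * ff M l * ff (k * n - M) (k * (s + 1) - l) / ff (k * n) (k * (s + 1))"
      by (rule ratio_alg[OF eA eB eC fM fNM fN ch]) (auto simp: Q0)
    have G: "Gp n k M s l = ff M l * ff (k * n - M) (k * (s + 1) - l) / ff (k * n) (k * (s + 1))"
      using Gp_ff[of l M k n s] lM Ml s l M unfolding tm1 by simp
    have "real (card (Eset n k M t l)) = real (card (permutations_of_multiset A)) *
        (real (card (permutations_of_multiset B)) * real (card (permutations_of_multiset C)) / real (card (permutations_of_multiset fA)))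
        * (real (count C n) / real (k * (s + 1) - l))"
      unfolding eqE cZ using hH by (simp add: field_simps)
    also have "\<dots> = real (card (permutations_of_multiset A)) * (real (k choose l) * Gp n k M s l * wt k s l)"
      unfolding R G wt_def cCn by simp
    finally show ?thesis unfolding t_def A_def .
  qed
qed

lemma success_formula:
  assumes k: "k \<ge> 1" and n: "n \<ge> 1" and M: "1 \<le> M" "M < k * n"
  shows "success_prob n k M = (\<Sum>s<n. \<Sum>l\<in>{1..k}. real (k choose l) * Gp n k M s l * wt k s l)"
proof -
  define cA where "cA = real (card (permutations_of_multiset (Amset n k)))"
  have cA0: "cA > 0" unfolding cA_def by (simp add: card_gt_0_iff)
  have "real (card {xs \<in> arrangements n k. strategy_succeeds n M xs})
      = (\<Sum>t\<in>{1..n}. \<Sum>l\<in>{1..k}. real (card (Eset n k M t l)))"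
    using card_success[OF n M(1)] M by simp
  also have "\<dots> = (\<Sum>s<n. \<Sum>l\<in>{1..k}. real (card (Eset n k M (n - s) l)))"
  proof -
    have inj: "inj_on (\<lambda>s. n - s) {..<n}" by (rule inj_onI) auto
    have im: "(\<lambda>s. n - s) ` {..<n} = {1..n}"
    proof (intro equalityI subsetI)
      fix t assume "t \<in> {1..n}"
      thus "t \<in> (\<lambda>s. n - s) ` {..<n}" by (intro image_eqI[of _ _ "n - t"]) auto
    qed auto
    show ?thesis using sum.reindex[OF inj, of "\<lambda>t. \<Sum>l\<in>{1..k}. real (card (Eset n k M t l))"] im by simp
  qed
  also have "\<dots> = (\<Sum>s<n. \<Sum>l\<in>{1..k}. cA * (real (k choose l) * Gp n k M s l * wt k s l))"
    using prob_sl[OF k n M] unfolding cA_def by (intro sum.cong refl) auto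
  also have "\<dots> = cA * (\<Sum>s<n. \<Sum>l\<in>{1..k}. real (k choose l) * Gp n k M s l * wt k s l)"
    by (simp add: sum_distrib_left)
  finally show ?thesis using cA0 unfolding success_prob_def cA_def arr_eq by simp
qed

lemma lim_ratio:
  fixes X Y :: "nat \<Rightarrow> real"
  assumes XY: "(\<lambda>n. X n / Y n) \<longlonglongrightarrow> c" and Y: "filterlim Y at_top sequentially"
  shows "(\<lambda>n. (X n - a) / (Y n - b)) \<longlonglongrightarrow> c"
proof -
  have Yi: "filterlim Y at_infinity sequentially" using Y by (rule filterlim_at_top_imp_at_infinity)
  have l: "(\<lambda>n. (X n / Y n - a / Y n) / (1 - b / Y n)) \<longlonglongrightarrow> (c - 0) / (1 - 0)"
    by (intro tendsto_intros XY tendsto_divide_0[OF _ Yi]) auto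
  have ev: "eventually (\<lambda>n. max b 0 < Y n) sequentially" using Y unfolding filterlim_at_top_dense by blast
  have "eventually (\<lambda>n. (X n / Y n - a / Y n) / (1 - b / Y n) = (X n - a) / (Y n - b)) sequentially"
    using ev
  proof eventually_elim
    case (elim n)
    hence "Y n \<noteq> 0" "Y n - b \<noteq> 0" by auto
    thus ?case by (simp add: field_simps)
  qed
  thus ?thesis using l by (simp add: Lim_transform_eventually)
qed

lemma kn_at_top:
  assumes "k \<ge> 1"
  shows "filterlim (\<lambda>n. real (k * n)) at_top sequentially"
proof (rule filterlim_at_top_mono[OF filterlim_real_sequentially])
  have "real n \<le> real (k * n)" for n using assms by (intro of_nat_mono) simp
  thus "eventually (\<lambda>n. real n \<le> real (k * n)) sequentially" by (intro always_eventually) blast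
qed

lemma Gp_lim:
  assumes k: "k \<ge> 1" and Mc: "(\<lambda>n. real (M n) / real (k * n)) \<longlonglongrightarrow> c"
  shows "(\<lambda>n. Gp n k (M n) s l) \<longlonglongrightarrow> c ^ l * (1 - c) ^ (k * (s + 1) - l)"
proof -
  have Y: "filterlim (\<lambda>n. real (k * n)) at_top sequentially" by (rule kn_at_top[OF k])
  have f1: "(\<lambda>n. (real (M n) - real i) / (real (k * n) - real i)) \<longlonglongrightarrow> c" for i
    by (rule lim_ratio[OF Mc Y])
  have XY2: "(\<lambda>n. (real (k * n) - real (M n)) / real (k * n)) \<longlonglongrightarrow> 1 - c"
  proof -
    have "(\<lambda>n. 1 - real (M n) / real (k * n)) \<longlonglongrightarrow> 1 - c" by (intro tendsto_intros Mc)
    moreover have "eventually (\<lambda>n. 1 - real (M n) / real (k * n) = (real (k * n) - real (M n)) / real (k * n)) sequentially"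
      using eventually_gt_at_top[of "0::nat"]
    proof eventually_elim
      case (elim n)
      hence "real (k * n) \<noteq> 0" using k by simp
      thus ?case by (simp add: field_simps)
    qed
    ultimately show ?thesis by (rule Lim_transform_eventually)
  qed
  have f2: "(\<lambda>n. (real (k * n) - real (M n) - real i) / (real (k * n) - real l - real i)) \<longlonglongrightarrow> 1 - c" for i
    using lim_ratio[OF XY2 Y, of "real i" "real l + real i"] by (simp add: diff_diff_eq)
  have "(\<lambda>n. Gp n k (M n) s l) \<longlonglongrightarrow> (\<Prod>i<l. c) * (\<Prod>i<k * (s + 1) - l. 1 - c)"
    unfolding Gp_def by (intro tendsto_mult tendsto_prod f1 f2)
  thus ?thesis by simp
qed

lemma frac_aux:
  fixes a b i :: real
  assumes "0 \<le> i" "i < a" "a \<le> b"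
  shows "(a - i) / (b - i) \<le> a / b"
proof -
  have "b - i > 0" "b > 0" using assms by auto
  moreover have "i * a \<le> i * b" using assms by (intro mult_left_mono) auto
  ultimately show ?thesis by (simp add: field_simps)
qed

lemma wt_bound:
  assumes "1 \<le> l" "l \<le> k"
  shows "0 \<le> wt k s l \<and> wt k s l \<le> 1"
proof (cases "s = 0")
  case True
  thus ?thesis by (simp add: wt_def)
next
  case False
  have "k * (s + 1) - l \<ge> k" using False assms by (cases s) auto
  hence "real k \<le> real (k * (s + 1) - l)" by (simp only: of_nat_le_iff)
  moreover have "real k > 0" using assms by simp
  moreover have w: "wt k s l = real k / real (k * (s + 1) - l)" using False by (simp add: wt_def del: of_nat_diff)
  ultimately show ?thesis unfolding w by (intro conjI divide_nonneg_nonneg) (auto simp del: of_nat_diff)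
qed

lemma Gp_bound:
  assumes l: "1 \<le> l" "l \<le> k" and kM: "k \<le> M" and MN: "M < k * n"
    and rho: "(real (k * n) - real M) / (real (k * n) - real k) \<le> \<rho>" and r1: "\<rho> \<le> 1"
  shows "0 \<le> Gp n k M s l \<and> Gp n k M s l \<le> \<rho> ^ (k * s)"
proof -
  define N where "N = k * n"
  define P1 where "P1 = (\<Prod>i<l. (real M - real i) / (real N - real i))"
  define P2 where "P2 = (\<Prod>i<k * (s + 1) - l. (real N - real M - real i) / (real N - real l - real i))"
  have G: "Gp n k M s l = P1 * P2" unfolding Gp_def P1_def P2_def N_def ..
  have P1: "0 \<le> P1 \<and> P1 \<le> 1"
  proof -
    have f: "0 \<le> (real M - real i) / (real N - real i) \<and> (real M - real i) / (real N - real i) \<le> 1" if "i < l" for i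
    proof -
      have "real i < real M" "real M < real N" using that l kM MN unfolding N_def by linarith+
      thus ?thesis by (simp add: divide_le_eq_1)
    qed
    show ?thesis unfolding P1_def using f by (auto intro!: prod_nonneg prod_le_1)
  qed
  have r0: "0 \<le> \<rho>"
  proof -
    have "real k < real N" using kM MN unfolding N_def by linarith
    moreover have "real M < real N" using MN unfolding N_def by linarith
    ultimately have "0 \<le> (real N - real M) / (real N - real k)" by simp
    thus ?thesis using rho unfolding N_def by linarith
  qed
  have ks: "k * s \<le> k * (s + 1) - l" using l by simp
  show ?thesis
  proof (cases "k * (s + 1) - l \<le> N - M")
    case True
    have g: "0 \<le> (real N - real M - real i) / (real N - real l - real i) \<and>
        (real N - real M - real i) / (real N - real l - real i) \<le> \<rho>" if "i < k * (s + 1) - l" for i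
    proof -
      have iNM: "real i < real N - real M" using that True MN unfolding N_def by linarith
      have lM: "real l \<le> real M" using l kM by linarith
      have d1: "(real N - real M - real i) / (real N - real l - real i) \<le> (real N - real M) / (real N - real l)"
        using frac_aux[of "real i" "real N - real M" "real N - real l"] iNM lM by simp
      have d2: "(real N - real M) / (real N - real l) \<le> (real N - real M) / (real N - real k)"
      proof (rule divide_left_mono)
        show "real N - real k \<le> real N - real l" using l by simp
        show "0 \<le> real N - real M" using MN unfolding N_def by linarith
        show "0 < (real N - real l) * (real N - real k)" using l kM MN unfolding N_def
          by (intro mult_pos_pos) linarith+
      qed
      have "0 \<le> (real N - real M - real i) / (real N - real l - real i)" using iNM lM by simp
      thus ?thesis using d1 d2 rho unfolding N_def by linarith
    qed
    have P2a: "0 \<le> P2" unfolding P2_def using g by (auto intro!: prod_nonneg)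
    have "P2 \<le> (\<Prod>i<k * (s + 1) - l. \<rho>)" unfolding P2_def using g by (intro prod_mono) auto
    also have "\<dots> = \<rho> ^ (k * (s + 1) - l)" by simp
    also have "\<dots> \<le> \<rho> ^ (k * s)" using ks r0 r1 by (rule power_decreasing)
    finally have "P2 \<le> \<rho> ^ (k * s)" .
    moreover have "P1 * P2 \<le> 1 * P2" using P1 P2a by (intro mult_right_mono) auto
    ultimately show ?thesis using G P1 P2a by auto
  next
    case False
    hence "P2 = 0" unfolding P2_def using l kM MN
      by (intro prod_zero) (auto intro!: bexI[of _ "N - M"] simp: N_def of_nat_diff)
    thus ?thesis using G r0 by simp
  qed
qed

definition bfun :: "nat \<Rightarrow> real \<Rightarrow> nat \<Rightarrow> real" where
  "bfun k c s = (\<Sum>l\<in>{1..k}. real (k choose l) * (c ^ l * (1 - c) ^ (k * (s + 1) - l)) * wt k s l)"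

lemma h_summable:
  assumes k: "k \<ge> 1" and c: "0 < c" "c < 1" and l: "l \<le> k"
  shows "summable (\<lambda>s. (1 - c) ^ (k * (s + 2)) / (real (k * (s + 2)) - real l))"
proof (rule summable_comparison_test'[where g="\<lambda>s. ((1 - c) ^ k) ^ s" and N=0])
  show "summable (\<lambda>s. ((1 - c) ^ k) ^ s)" using c k
    by (intro summable_geometric) (simp add: power_less_one_iff abs_of_nonneg)
  fix s :: nat
  have D: "real (k * (s + 2)) - real l \<ge> 1"
  proof -
    have "k * (s + 2) \<ge> l + 1" using k l by (simp add: algebra_simps)
    hence "real (k * (s + 2)) \<ge> real l + 1" by linarith
    thus ?thesis by simp
  qed
  have "norm ((1 - c) ^ (k * (s + 2)) / (real (k * (s + 2)) - real l)) = (1 - c) ^ (k * (s + 2)) / (real (k * (s + 2)) - real l)"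
    using c D by simp
  also have "\<dots> \<le> (1 - c) ^ (k * (s + 2))"
  proof -
    have x0: "0 \<le> (1 - c) ^ (k * (s + 2))" using c by simp
    have "(1 - c) ^ (k * (s + 2)) * 1 \<le> (1 - c) ^ (k * (s + 2)) * (real (k * (s + 2)) - real l)"
      using x0 D by (intro mult_left_mono) auto
    thus ?thesis using D by (simp add: pos_divide_le_eq)
  qed
  also have "\<dots> \<le> (1 - c) ^ (k * s)" using c by (intro power_decreasing) auto
  also have "\<dots> = ((1 - c) ^ k) ^ s" by (simp add: power_mult)
  finally show "norm ((1 - c) ^ (k * (s + 2)) / (real (k * (s + 2)) - real l)) \<le> ((1 - c) ^ k) ^ s" .
qed

lemma b0_eq:
  assumes k: "k \<ge> 1" and c: "0 < c" "c < 1"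
  shows "bfun k c 0 = (1 - c) ^ k * (\<Sum>l=1..k-1. real (k choose l) * (c / (1 - c)) ^ l)"
proof -
  have ins: "{1..k} = insert k {1..k-1}" using k by auto
  have "bfun k c 0 = (\<Sum>l\<in>{1..k-1}. real (k choose l) * (c ^ l * (1 - c) ^ (k - l)) * wt k 0 l)
      + real (k choose k) * (c ^ k * (1 - c) ^ (k - k)) * wt k 0 k"
    unfolding bfun_def ins by (subst sum.insert) auto
  also have "wt k 0 k = 0" by (simp add: wt_def)
  also have "(\<Sum>l\<in>{1..k-1}. real (k choose l) * (c ^ l * (1 - c) ^ (k - l)) * wt k 0 l)
      = (\<Sum>l\<in>{1..k-1}. (1 - c) ^ k * (real (k choose l) * (c / (1 - c)) ^ l))"
  proof (intro sum.cong refl)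
    fix l assume l: "l \<in> {1..k-1}"
    have w: "wt k 0 l = 1" using l by (auto simp: wt_def)
    have "k - l + l = k" using l by auto
    hence "(1 - c) ^ k = (1 - c) ^ (k - l) * (1 - c) ^ l"
      by (metis power_add)
    thus "real (k choose l) * (c ^ l * (1 - c) ^ (k - l)) * wt k 0 l = (1 - c) ^ k * (real (k choose l) * (c / (1 - c)) ^ l)"
      using c w by (simp add: power_divide field_simps)
  qed
  finally show ?thesis by (simp add: sum_distrib_left)
qed

lemma tail_eq:
  assumes k: "k \<ge> 1" and c: "0 < c" "c < 1"
  shows "(\<Sum>s. bfun k c (Suc s)) = real k * (\<Sum>l=1..k. real (k choose l) * (c / (1 - c)) ^ l *
        (\<Sum>s. (1 - c) ^ (k * (s + 2)) / (real (k * (s + 2)) - real l)))"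
proof -
  define h where "h l s = (1 - c) ^ (k * (s + 2)) / (real (k * (s + 2)) - real l)" for l s
  have hs: "summable (h l)" if "l \<in> {1..k}" for l
    unfolding h_def using h_summable[OF k c, of l] that by simp
  have "real k * (\<Sum>l=1..k. real (k choose l) * (c / (1 - c)) ^ l * suminf (h l))
      = (\<Sum>l=1..k. \<Sum>s. real k * real (k choose l) * (c / (1 - c)) ^ l * h l s)"
    unfolding sum_distrib_left using hs by (intro sum.cong refl) (simp add: suminf_mult mult.assoc)
  also have "\<dots> = (\<Sum>s. \<Sum>l=1..k. real k * real (k choose l) * (c / (1 - c)) ^ l * h l s)"
    using hs by (intro suminf_sum[symmetric] summable_mult) auto
  also have "\<dots> = (\<Sum>s. bfun k c (Suc s))"
  proof -
    have trm: "real k * real (k choose l) * (c / (1 - c)) ^ l * h l s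
        = real (k choose l) * (c ^ l * (1 - c) ^ (k * (Suc s + 1) - l)) * wt k (Suc s) l"
      if l: "l \<in> {1..k}" for s l
    proof -
      have lk: "l \<le> k * (s + 2)" using l by (simp add: trans_le_add1)
      have D: "real (k * (s + 2)) - real l = real (k * (Suc s + 1) - l)" using lk by (simp add: of_nat_diff)
      have "k * (s + 2) = (k * (Suc s + 1) - l) + l" using lk by simp
      hence P: "(1 - c) ^ (k * (s + 2)) = (1 - c) ^ (k * (Suc s + 1) - l) * (1 - c) ^ l"
        by (metis power_add)
      have w: "wt k (Suc s) l = real k / real (k * (Suc s + 1) - l)" by (simp add: wt_def)
      show ?thesis
        unfolding h_def D P w using c by (simp add: power_divide field_simps)
    qed
    show ?thesis unfolding bfun_def using trm by (intro suminf_cong sum.cong) auto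
  qed
  finally show ?thesis unfolding h_def by simp
qed

theorem mainTheorem4:
  fixes k :: nat and c :: real and M :: "nat \<Rightarrow> nat"
  assumes "k \<ge> 2" and "0 < c" and "c < 1"
    and "\<And>n. n \<ge> 1 \<Longrightarrow> 1 \<le> M n \<and> M n \<le> k * n - 1"
    and "(\<lambda>n. real (M n) / real (k * n)) \<longlonglongrightarrow> c"
  shows "(\<lambda>n. success_prob n k (M n)) \<longlonglongrightarrow>
     real k * (\<Sum>l=1..k. real (k choose l) * (c / (1 - c)) ^ l *
        (\<Sum>s. (1 - c) ^ (k * (s + 2)) / (real (k * (s + 2)) - real l)))
     + (1 - c) ^ k * (\<Sum>l=1..k-1. real (k choose l) * (c / (1 - c)) ^ l)"
proof -
  note k2 = assms(1) and c0 = assms(2) and c1 = assms(3) and Mb = assms(4) and Mc = assms(5)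
  have k: "k \<ge> 1" using k2 by simp
  define a where "a s n = (if s < n then (\<Sum>l\<in>{1..k}. real (k choose l) * Gp n k (M n) s l * wt k s l) else 0)" for s n
  define b where "b = bfun k c"
  define \<rho> where "\<rho> = 1 - c / 4"
  define Cs where "Cs = (\<Sum>l\<in>{1..k}. real (k choose l))"
  define Mbd where "Mbd s = Cs * \<rho> ^ (k * s)" for s
  have r0: "0 < \<rho>" "\<rho> < 1" using c0 c1 unfolding \<rho>_def by auto
  have Cs0: "0 \<le> Cs" unfolding Cs_def by (intro sum_nonneg) auto
  have lim: "(\<lambda>n. a s n) \<longlonglongrightarrow> b s" for s
  proof -
    have "(\<lambda>n. \<Sum>l\<in>{1..k}. real (k choose l) * Gp n k (M n) s l * wt k s l) \<longlonglongrightarrow> b s"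
      unfolding b_def bfun_def by (intro tendsto_sum tendsto_mult tendsto_const Gp_lim[OF k Mc])
    moreover have "eventually (\<lambda>n. (\<Sum>l\<in>{1..k}. real (k choose l) * Gp n k (M n) s l * wt k s l) = a s n) sequentially"
      using eventually_gt_at_top[of s] by eventually_elim (simp add: a_def)
    ultimately show ?thesis by (rule Lim_transform_eventually)
  qed
  have ev1: "eventually (\<lambda>n. c / 2 < real (M n) / real (k * n)) sequentially"
    using Mc c0 by (intro order_tendstoD(1)) auto
  have ev2: "eventually (\<lambda>n. 4 * real k / c < real (k * n)) sequentially"
    using kn_at_top[OF k] unfolding filterlim_at_top_dense by blast
  have ev3: "eventually (\<lambda>n. 1 \<le> n) sequentially" by (rule eventually_ge_at_top)
  have good: "eventually (\<lambda>n. 1 \<le> n \<and> k \<le> M n \<and> M n < k * n \<and>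
      (real (k * n) - real (M n)) / (real (k * n) - real k) \<le> \<rho>) sequentially"
    using ev1 ev2 ev3
  proof eventually_elim
    case (elim n)
    define N where "N = real (k * n)"
    define m where "m = real (M n)"
    have Npos: "N > 0" using elim k unfolding N_def by simp
    have h1: "m > c * N / 2" using elim(1) Npos unfolding m_def N_def by (simp add: field_simps)
    have h2: "c * N > 4 * real k" using elim(2) c0 unfolding N_def by (simp add: field_simps)
    have h3: "c * real k \<ge> 0" using c0 by simp
    have km: "real k \<le> m" using h1 h2 by linarith
    have MN: "M n < k * n" using Mb[OF elim(3)] k elim(3)
    proof -
      have "k * n \<ge> 1" using k elim(3) by simp
      thus ?thesis using Mb[OF elim(3)] by linarith
    qed
    have mN: "m < N" using MN unfolding m_def N_def by (simp only: of_nat_less_iff)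
    have Nk: "N - real k > 0" using km mN by linarith
    have e: "(1 - c / 4) * (N - real k) = N - real k - c * N / 4 + c * real k / 4" by (simp add: field_simps)
    have "N - m \<le> (1 - c / 4) * (N - real k)" unfolding e using h1 h2 h3 by linarith
    hence "(N - m) / (N - real k) \<le> \<rho>" using Nk unfolding \<rho>_def by (simp add: pos_divide_le_eq)
    moreover have "k \<le> M n" using km unfolding m_def by simp
    ultimately show ?case using elim(3) MN unfolding N_def m_def by simp
  qed
  have bound: "eventually (\<lambda>(s, n). norm (a s n) \<le> Mbd s) (at_top \<times>\<^sub>F sequentially)"
    unfolding eventually_prod_filter
  proof (intro exI conjI)
    show "eventually (\<lambda>s. True) at_top" by simp
    show "eventually (\<lambda>n. 1 \<le> n \<and> k \<le> M n \<and> M n < k * n \<and>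
      (real (k * n) - real (M n)) / (real (k * n) - real k) \<le> \<rho>) sequentially" by (rule good)
    show "\<forall>s n. True \<longrightarrow> (1 \<le> n \<and> k \<le> M n \<and> M n < k * n \<and>
      (real (k * n) - real (M n)) / (real (k * n) - real k) \<le> \<rho>) \<longrightarrow> (case (s, n) of (s, n) \<Rightarrow> norm (a s n) \<le> Mbd s)"
    proof (intro allI impI)
      fix s n assume h: "1 \<le> n \<and> k \<le> M n \<and> M n < k * n \<and>
        (real (k * n) - real (M n)) / (real (k * n) - real k) \<le> \<rho>"
      have Mb0: "0 \<le> Mbd s" unfolding Mbd_def using Cs0 r0 by simp
      show "case (s, n) of (s, n) \<Rightarrow> norm (a s n) \<le> Mbd s"
      proof (cases "s < n")
        case False
        thus ?thesis using Mb0 by (simp add: a_def)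
      next
        case True
        have "norm (a s n) \<le> (\<Sum>l\<in>{1..k}. norm (real (k choose l) * Gp n k (M n) s l * wt k s l))"
          using True unfolding a_def by (simp add: norm_sum)
        also have "\<dots> \<le> (\<Sum>l\<in>{1..k}. real (k choose l) * \<rho> ^ (k * s))"
        proof (intro sum_mono)
          fix l assume l: "l \<in> {1..k}"
          have G: "0 \<le> Gp n k (M n) s l \<and> Gp n k (M n) s l \<le> \<rho> ^ (k * s)"
            using Gp_bound[of l k "M n" n \<rho> s] l h r0 by auto
          have W: "0 \<le> wt k s l \<and> wt k s l \<le> 1" using wt_bound[of l k s] l by auto
          have "norm (real (k choose l) * Gp n k (M n) s l * wt k s l) = real (k choose l) * (Gp n k (M n) s l * wt k s l)"
            using G W by (simp add: abs_mult)
          also have "\<dots> \<le> real (k choose l) * (\<rho> ^ (k * s) * 1)"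
            using G W by (intro mult_left_mono mult_mono) auto
          finally show "norm (real (k choose l) * Gp n k (M n) s l * wt k s l) \<le> real (k choose l) * \<rho> ^ (k * s)" by simp
        qed
        also have "\<dots> = Mbd s" unfolding Mbd_def Cs_def by (simp add: sum_distrib_right)
        finally show ?thesis by simp
      qed
    qed
  qed
  have summ: "summable Mbd"
  proof -
    have "summable (\<lambda>s. (\<rho> ^ k) ^ s)" using r0 k by (intro summable_geometric) (simp add: power_less_one_iff abs_of_nonneg)
    hence "summable (\<lambda>s. Cs * (\<rho> ^ k) ^ s)" by (rule summable_mult)
    thus ?thesis unfolding Mbd_def by (simp add: power_mult)
  qed
  have T: "eventually (\<lambda>n. summable (\<lambda>s. norm (a s n))) sequentially \<and>
      summable (\<lambda>s. norm (b s)) \<and> ((\<lambda>n. suminf (\<lambda>s. a s n)) \<longlonglongrightarrow> suminf b)"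
    by (rule tannerys_theorem[OF lim bound summ]) simp
  have sb: "summable b" using T summable_norm_cancel by blast
  have eqn: "eventually (\<lambda>n. suminf (\<lambda>s. a s n) = success_prob n k (M n)) sequentially"
    using good
  proof eventually_elim
    case (elim n)
    have "suminf (\<lambda>s. a s n) = (\<Sum>s<n. a s n)"
      by (rule suminf_finite) (auto simp: a_def)
    also have "\<dots> = (\<Sum>s<n. \<Sum>l\<in>{1..k}. real (k choose l) * Gp n k (M n) s l * wt k s l)"
      by (intro sum.cong refl) (auto simp: a_def)
    also have "\<dots> = success_prob n k (M n)"
      using success_formula[OF k, of n "M n"] Mb[of n] elim by simp
    finally show ?case .
  qed
  have L1: "(\<lambda>n. success_prob n k (M n)) \<longlonglongrightarrow> suminf b"
    using T eqn by (auto intro: Lim_transform_eventually)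
  have "suminf b = b 0 + (\<Sum>s. b (Suc s))" using suminf_split_head[OF sb] by simp
  also have "\<dots> = (1 - c) ^ k * (\<Sum>l=1..k-1. real (k choose l) * (c / (1 - c)) ^ l)
      + real k * (\<Sum>l=1..k. real (k choose l) * (c / (1 - c)) ^ l *
        (\<Sum>s. (1 - c) ^ (k * (s + 2)) / (real (k * (s + 2)) - real l)))"
    unfolding b_def using b0_eq[OF k c0 c1] tail_eq[OF k c0 c1] by simp
  finally show ?thesis using L1 by (simp add: add.commute)
qed

end
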